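(* Let $B>0$ and let $y_1,y_2,y_3,y_4$ be defined for $t>0$, $x\in\mathbb{R}\setminus\{0\}$, $u=x/(Bt)^{1/4}$ by $y_{1}=(Bt)^{1/4}[\tfrac{1}{\sqrt2}z_2(u)-\tfrac{1}{2\Gamma(3/4)}z_3(u)+\tfrac{1}{6\sqrt2\Gamma(1/2)}z_4(u)]$, $y_{2}=(Bt)^{1/4}[\tfrac{1}{\Gamma(5/4)}z_1(u)-\tfrac{1}{\sqrt2}z_2(u)+\tfrac{1}{6\sqrt2\Gamma(1/2)}z_4(u)]$, $y_{3}=(Bt)^{1/4}[\tfrac{1}{\sqrt2}z_2(u)+\tfrac{1}{2\Gamma(3/4)}z_3(u)+\tfrac{1}{6\sqrt2\Gamma(1/2)}z_4(u)]$, $y_{4}=(Bt)^{1/4}[\tfrac{1}{\Gamma(5/4)}z_1(u)+\tfrac{1}{\sqrt2}z_2(u)-\tfrac{1}{6\sqrt2\Gamma(1/2)}z_4(u)]$, where $z_{1}(u)={}_{1}F_{3}(-\tfrac{1}{4};\tfrac{1}{4},\tfrac{1}{2},\tfrac{3}{4};\tfrac{u^{4}}{256})$, $z_{2}(u)=u$, $z_{3}(u)=u^{2}\,{}_{1}F_{3}(\tfrac{1}{4};\tfrac{3}{4},\tfrac{5}{4},\tfrac{3}{2};\tfrac{u^{4}}{256})$, $z_{4}(u)=u^{3}\,{}_{1}F_{3}(\tfrac{1}{2};\tfrac{5}{4},\tfrac{3}{2},\tfrac{7}{4};\tfrac{u^{4}}{256})$. Then for $t>0$, $\lim_{x\to\infty}y_3(t,x)=\infty$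 and $\lim_{x\to\infty}y_4(t,x)=-\infty$; for $x>0$, $\lim_{t\to0}y_3(t,x)=\infty$ and $\lim_{t\to0}y_4(t,x)=-\infty$. Similarly, for $t>0$, $\lim_{x\to-\infty}y_1(t,x)=\lim_{x\to-\infty}y_2(t,x)=-\infty$, and for $x>0$, $\lim_{t\to0}y_1(t,-x)=\lim_{t\to0}y_2(t,-x)=-\infty$.
   Context: ${}_{p}F_{q}(a_{1},\ldots,a_{p};b_{1},\ldots,b_{q};\nu)=\sum_{k\ge0}\frac{(a_{1})_{k}\cdots(a_{p})_{k}}{(b_{1})_{k}\cdots(b_{q})_{k}}\frac{\nu^{k}}{k!}$ is the generalized hypergeometric function, with Pochhammer symbol $(\lambda)_{k}=\lambda(\lambda+1)\cdots(\lambda+k-1)$, $(\lambda)_0=1$. $\Gamma$ is the Gamma function. *)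

theory Defs
  imports "HOL-Analysis.Analysis"
begin

definition hypgeom :: "real list \<Rightarrow> real list \<Rightarrow> real \<Rightarrow> real" where
  "hypgeom as bs z =
     (\<Sum>k. (\<Prod>a\<leftarrow>as. pochhammer a k) / (\<Prod>b\<leftarrow>bs. pochhammer b k) * z ^ k / fact k)"

definition z1 :: "real \<Rightarrow> real" where
  "z1 u = hypgeom [-1/4] [1/4, 1/2, 3/4] (u ^ 4 / 256)"

definition z2 :: "real \<Rightarrow> real" where
  "z2 u = u"

definition z3 :: "real \<Rightarrow> real" where
  "z3 u = u ^ 2 * hypgeom [1/4] [3/4, 5/4, 3/2] (u ^ 4 / 256)"

definition z4 :: "real \<Rightarrow> real" where
  "z4 u = u ^ 3 * hypgeom [1/2] [5/4, 3/2, 7/4] (u ^ 4 / 256)"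

definition uvar :: "real \<Rightarrow> real \<Rightarrow> real \<Rightarrow> real" where
  "uvar B t x = x / (B * t) powr (1/4)"

definition y1 :: "real \<Rightarrow> real \<Rightarrow> real \<Rightarrow> real" where
  "y1 B t x = (B * t) powr (1/4) *
     (1 / sqrt 2 * z2 (uvar B t x) - 1 / (2 * Gamma (3/4)) * z3 (uvar B t x)
      + 1 / (6 * sqrt 2 * Gamma (1/2)) * z4 (uvar B t x))"

definition y2 :: "real \<Rightarrow> real \<Rightarrow> real \<Rightarrow> real" where
  "y2 B t x = (B * t) powr (1/4) *
     (1 / Gamma (5/4) * z1 (uvar B t x) - 1 / sqrt 2 * z2 (uvar B t x)
      + 1 / (6 * sqrt 2 * Gamma (1/2)) * z4 (uvar B t x))"

definition y3 :: "real \<Rightarrow> real \<Rightarrow> real \<Rightarrow> real" where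
  "y3 B t x = (B * t) powr (1/4) *
     (1 / sqrt 2 * z2 (uvar B t x) + 1 / (2 * Gamma (3/4)) * z3 (uvar B t x)
      + 1 / (6 * sqrt 2 * Gamma (1/2)) * z4 (uvar B t x))"

definition y4 :: "real \<Rightarrow> real \<Rightarrow> real \<Rightarrow> real" where
  "y4 B t x = (B * t) powr (1/4) *
     (1 / Gamma (5/4) * z1 (uvar B t x) + 1 / sqrt 2 * z2 (uvar B t x)
      - 1 / (6 * sqrt 2 * Gamma (1/2)) * z4 (uvar B t x))"

end

theory Submission imports Defs "HOL-Real_Asymp.Real_Asymp" begin

lemma poch_ge1: "(b::real) \<ge> 1 \<Longrightarrow> pochhammer b n \<ge> 1"
proof (induction n)
  case (Suc n) thus ?case
    by (simp add: pochhammer_Suc) (metis less_eq_real_def mult_mono of_nat_0_le_iff  order_trans  le_add_same_cancel1 mult_1_right zero_le_one add_increasing)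
qed simp

lemma poch_mono: "0 < (a::real) \<Longrightarrow> a \<le> b \<Longrightarrow> pochhammer a n \<le> pochhammer b n"
proof (induction n)
  case (Suc n) thus ?case
    by (simp add: pochhammer_Suc) (rule mult_mono, auto intro!: pochhammer_nonneg)
qed simp

lemma poch_ge_min: "0 < (b::real) \<Longrightarrow> b \<le> 1 \<Longrightarrow> pochhammer b n \<ge> b"
proof (cases n)
  case (Suc m)
  assume "0 < b" "b \<le> 1"
  have "pochhammer (b+1) m \<ge> 1" by (rule poch_ge1) (use \<open>0<b\<close> in simp)
  then show ?thesis using Suc \<open>0<b\<close> by (simp add: pochhammer_rec)
qed simp

lemma summ_bound:
  assumes "\<And>k. \<bar>c k\<bar> \<le> (C::real)"
  shows "summable (\<lambda>k. c k * w ^ k / fact k)"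
proof (rule summable_comparison_test)
  show "summable (\<lambda>k. C * (inverse (fact k) * \<bar>w\<bar> ^ k))"
    by (intro summable_mult summable_exp)
  show "\<exists>N. \<forall>n\<ge>N. norm (c n * w ^ n / fact n) \<le> C * (inverse (fact n) * \<bar>w\<bar> ^ n)"
  proof (intro exI allI impI)
    fix n :: nat
    have "norm (c n * w ^ n / fact n) = \<bar>c n\<bar> * (inverse (fact n) * \<bar>w\<bar> ^ n)"
      by (simp add: abs_mult power_abs field_simps)
    also have "\<dots> \<le> C * (inverse (fact n) * \<bar>w\<bar> ^ n)"
      by (intro mult_right_mono assms) auto
    finally show "norm (c n * w ^ n / fact n) \<le> C * (inverse (fact n) * \<bar>w\<bar> ^ n)" .
  qed
qed

definition c1 :: "nat \<Rightarrow> real" where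
  "c1 k = pochhammer (-1/4) k / (pochhammer (1/4) k * pochhammer (1/2) k * pochhammer (3/4) k)"
definition c3 :: "nat \<Rightarrow> real" where
  "c3 k = pochhammer (1/4) k / (pochhammer (3/4) k * pochhammer (5/4) k * pochhammer (3/2) k)"
definition c4 :: "nat \<Rightarrow> real" where
  "c4 k = pochhammer (1/2) k / (pochhammer (5/4) k * pochhammer (3/2) k * pochhammer (7/4) k)"

lemma hg1: "hypgeom [-1/4] [1/4, 1/2, 3/4] w = (\<Sum>k. c1 k * w ^ k / fact k)"
  by (simp add: hypgeom_def c1_def mult.assoc)
lemma hg3: "hypgeom [1/4] [3/4, 5/4, 3/2] w = (\<Sum>k. c3 k * w ^ k / fact k)"
  by (simp add: hypgeom_def c3_def mult.assoc)
lemma hg4: "hypgeom [1/2] [5/4, 3/2, 7/4] w = (\<Sum>k. c4 k * w ^ k / fact k)"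
  by (simp add: hypgeom_def c4_def mult.assoc)

lemma c3_bounds: "0 \<le> c3 k" "c3 k \<le> 1"
proof -
  have a: "pochhammer (1/4::real) k \<le> pochhammer (3/4) k" by (rule poch_mono) auto
  have b: "pochhammer (5/4::real) k \<ge> 1" "pochhammer (3/2::real) k \<ge> 1" by (auto intro: poch_ge1)
  have p: "pochhammer (1/4::real) k > 0" "pochhammer (3/4::real) k > 0" by (auto intro: pochhammer_pos)
  have "pochhammer (1/4::real) k \<le> pochhammer (3/4) k * pochhammer (5/4) k * pochhammer (3/2) k"
    using a b p by (smt (verit) mult_le_cancel_left1 mult_mono one_le_mult_iff)
  then show "c3 k \<le> 1" "0 \<le> c3 k" using p b unfolding c3_def
    by (auto simp: divide_le_eq_1 intro!: divide_nonneg_pos mult_pos_pos)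
qed


lemma c4_bounds: "0 \<le> c4 k" "c4 k \<le> 1"
proof -
  have a: "pochhammer (1/2::real) k \<le> pochhammer (5/4) k" by (rule poch_mono) auto
  have b: "pochhammer (3/2::real) k \<ge> 1" "pochhammer (7/4::real) k \<ge> 1" by (auto intro: poch_ge1)
  have p: "pochhammer (1/2::real) k > 0" "pochhammer (5/4::real) k > 0" by (auto intro: pochhammer_pos)
  have "pochhammer (1/2::real) k \<le> pochhammer (5/4) k * pochhammer (3/2) k * pochhammer (7/4) k"
    using a b p by (smt (verit) mult_le_cancel_left1 mult_mono one_le_mult_iff)
  then show "c4 k \<le> 1" "0 \<le> c4 k" using p b unfolding c4_def
    by (auto simp: divide_le_eq_1 intro!: divide_nonneg_pos mult_pos_pos)
qed

lemma c1_bound: "\<bar>c1 k\<bar> \<le> 8/3"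
proof -
  have num: "\<bar>pochhammer (-1/4::real) k\<bar> \<le> pochhammer (1/4) k"
  proof (cases k)
    case (Suc n)
    have "pochhammer (3/4::real) n \<le> pochhammer (5/4) n" by (rule poch_mono) auto
    moreover have "pochhammer (3/4::real) n > 0" by (auto intro: pochhammer_pos)
    ultimately show ?thesis using Suc by (simp add: pochhammer_rec abs_mult)
  qed simp
  have p1: "pochhammer (1/4::real) k > 0" by (auto intro: pochhammer_pos)
  have p2: "pochhammer (1/2::real) k \<ge> 1/2" by (rule poch_ge_min) auto
  have p3: "pochhammer (3/4::real) k \<ge> 3/4" by (rule poch_ge_min) auto
  have p23: "pochhammer (1/2::real) k * pochhammer (3/4) k \<ge> 3/8"
  proof -
    have "0 \<le> pochhammer (1/2::real) k" using p2 by linarith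
    from mult_mono[OF p2 p3 this] show ?thesis by simp
  qed
  have "\<bar>c1 k\<bar> = \<bar>pochhammer (-1/4::real) k\<bar> / pochhammer (1/4) k / (pochhammer (1/2) k * pochhammer (3/4) k)"
    using p1 p2 p3 by (simp add: c1_def abs_mult field_simps)
  also have "\<dots> \<le> 1 / (pochhammer (1/2) k * pochhammer (3/4) k)"
    using num p1 p23 by (intro divide_right_mono) (auto simp: divide_le_eq_1)
  also have "\<dots> \<le> 1 / (3/8)"
    using p23 by (intro divide_left_mono) auto
  finally show ?thesis by simp
qed

lemma c1_0: "c1 0 = 1" by (simp add: c1_def)

lemma c1_Suc: "c1 (Suc n) \<le> 0"
proof -
  have "pochhammer (3/4::real) n > 0" by (auto intro: pochhammer_pos)
  moreover have "pochhammer (1/4::real) (Suc n) * pochhammer (1/2) (Suc n) * pochhammer (3/4) (Suc n) > 0"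
    by (auto intro!: mult_pos_pos pochhammer_pos)
  moreover have "pochhammer (-1/4::real) (Suc n) = -(1/4) * pochhammer (3/4) n"
    by (subst pochhammer_rec) simp
  ultimately show ?thesis unfolding c1_def
    by (auto intro!: divide_nonpos_pos)
qed

lemma S1_le: assumes "w \<ge> 0" shows "(\<Sum>k. c1 k * w ^ k / fact k) \<le> 1"
proof -
  let ?f = "\<lambda>k. c1 k * w ^ k / fact k"
  have s: "summable ?f" by (rule summ_bound[OF c1_bound])
  have "(\<Sum>n. ?f (Suc n)) \<le> (\<Sum>n. (0::real))"
  proof (rule suminf_le)
    show "\<And>n. ?f (Suc n) \<le> 0" using c1_Suc assms
      by (intro divide_nonpos_pos mult_nonpos_nonneg) auto
    show "summable (\<lambda>n. ?f (Suc n))" by (rule summable_Suc_iff[THEN iffD2, OF s])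
  qed auto
  then show ?thesis using suminf_split_head[OF s] by (simp add: c1_0)
qed

lemma S3_ge: assumes "w \<ge> 0" shows "(\<Sum>k. c3 k * w ^ k / fact k) \<ge> 1"
proof -
  let ?f = "\<lambda>k. c3 k * w ^ k / fact k"
  have s: "summable ?f" by (rule summ_bound[of _ 1]) (use c3_bounds in auto)
  have "sum ?f {..<1} \<le> suminf ?f"
    by (rule sum_le_suminf[OF s]) (use c3_bounds assms in auto)
  then show ?thesis by (simp add: c3_def)
qed

lemma S4_ge: assumes "w \<ge> 0" shows "(\<Sum>k. c4 k * w ^ k / fact k) \<ge> 1"
proof -
  let ?f = "\<lambda>k. c4 k * w ^ k / fact k"
  have s: "summable ?f" by (rule summ_bound[of _ 1]) (use c4_bounds in auto)
  have "sum ?f {..<1} \<le> suminf ?f"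
    by (rule sum_le_suminf[OF s]) (use c4_bounds assms in auto)
  then show ?thesis by (simp add: c4_def)
qed

lemma z1_le: "z1 u \<le> 1"
  unfolding z1_def hg1 by (rule S1_le) simp

lemma z3_ge: "z3 u \<ge> u^2"
proof -
  have "1 \<le> hypgeom [1/4] [3/4, 5/4, 3/2] (u ^ 4 / 256)"
    unfolding hg3 by (rule S3_ge) simp
  then show ?thesis unfolding z3_def
    using mult_left_mono[of 1 _ "u^2"] by simp
qed

lemma z4_pos: "u \<ge> 0 \<Longrightarrow> z4 u \<ge> u^3"
proof -
  assume u: "u \<ge> 0"
  have "1 \<le> hypgeom [1/2] [5/4, 3/2, 7/4] (u ^ 4 / 256)"
    unfolding hg4 by (rule S4_ge) simp
  then show ?thesis unfolding z4_def
    using mult_left_mono[of 1 _ "u^3"] u by simp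
qed

lemma z4_neg: "u \<le> 0 \<Longrightarrow> z4 u \<le> u^3"
proof -
  assume u: "u \<le> 0"
  have "1 \<le> hypgeom [1/2] [5/4, 3/2, 7/4] (u ^ 4 / 256)"
    unfolding hg4 by (rule S4_ge) simp
  moreover have "u^3 \<le> 0" using u by (simp add: power_le_zero_eq)
  ultimately show ?thesis unfolding z4_def
    using mult_left_mono_neg[of 1 _ "u^3"] by simp
qed

lemma gam_pos: "Gamma (3/4::real) > 0" "Gamma (5/4::real) > 0" "Gamma (1/2::real) > 0"
  by (auto intro: Gamma_real_pos)

lemma s_pos: "B > 0 \<Longrightarrow> t > 0 \<Longrightarrow> (B * t) powr (1/4::real) > 0"
  by simp

lemma s_lim: assumes "B > 0"
  shows "filterlim (\<lambda>t. (B * t) powr (1/4::real)) (at_right 0) (at_right 0)"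
proof (rule tendsto_imp_filterlim_at_right)
  have "((\<lambda>t. B * t) \<longlongrightarrow> B * 0) (at_right (0::real))"
    by (intro tendsto_intros)
  then have "((\<lambda>t. B * t) \<longlongrightarrow> 0) (at_right (0::real))" by simp
  then show "((\<lambda>t. (B * t) powr (1/4::real)) \<longlongrightarrow> 0) (at_right 0)"
    by (rule tendsto_zero_powrI[OF _ tendsto_const]) (use assms in \<open>auto simp: eventually_at_right_less intro!: eventually_at_rightI[of _ 1]\<close>)
  show "\<forall>\<^sub>F t in at_right 0. 0 < (B * t) powr (1/4::real)"
    using assms by (auto intro!: eventually_at_rightI[of _ 1])
qed

lemma ev_pos: "\<forall>\<^sub>F t in at_right (0::real). t > 0"
  by (auto intro!: eventually_at_rightI[of _ 1])

definition KK :: real where "KK = 1 / (6 * sqrt 2 * Gamma (1/2))"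
definition G3 :: real where "G3 = Gamma (3/4)"
definition G5 :: real where "G5 = Gamma (5/4)"

lemma KK_pos: "KK > 0" using gam_pos by (simp add: KK_def)
lemma G3_pos: "G3 > 0" using gam_pos by (simp add: G3_def)
lemma G5_pos: "G5 > 0" using gam_pos by (simp add: G5_def)

lemma y3_lb:
  assumes "B > 0" "t > 0" "x \<ge> 0"
  shows "y3 B t x \<ge> x / sqrt 2" "y3 B t x \<ge> x^2 / (2 * G3 * (B * t) powr (1/4))"
proof -
  define s where "s = (B * t) powr (1/4::real)"
  have s: "s > 0" using assms by (simp add: s_def)
  define u where "u = x / s"
  have u: "u \<ge> 0" using s assms by (simp add: u_def)
  have e: "y3 B t x = s * (u / sqrt 2 + z3 u / (2 * G3) + KK * z4 u)"
    by (simp add: y3_def s_def u_def uvar_def z2_def KK_def G3_def)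
  have z3: "z3 u / (2 * G3) \<ge> u^2 / (2 * G3)"
    using z3_ge[of u] G3_pos by (intro divide_right_mono) auto
  have z4: "KK * z4 u \<ge> 0" using z4_pos[OF u] u KK_pos by (simp add: order_trans[OF _ z4_pos[OF u]])
  have i1: "u / sqrt 2 + z3 u / (2 * G3) + KK * z4 u \<ge> u / sqrt 2"
    using z3 z4 G3_pos by (smt (verit) divide_nonneg_pos zero_le_power2)
  have i2: "u / sqrt 2 + z3 u / (2 * G3) + KK * z4 u \<ge> u^2 / (2 * G3)"
    using z3 z4 u by (smt (verit) divide_nonneg_pos real_sqrt_gt_zero zero_less_numeral)
  have "y3 B t x \<ge> s * (u / sqrt 2)" unfolding e using i1 s by (intro mult_left_mono) auto
  also have "s * (u / sqrt 2) = x / sqrt 2" using s by (simp add: u_def)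
  finally show "y3 B t x \<ge> x / sqrt 2" .
  have "y3 B t x \<ge> s * (u^2 / (2 * G3))" unfolding e using i2 s by (intro mult_left_mono) auto
  also have "s * (u^2 / (2 * G3)) = x^2 / (2 * G3 * s)" using s by (simp add: u_def power2_eq_square)
  finally show "y3 B t x \<ge> x^2 / (2 * G3 * (B * t) powr (1/4))" by (simp add: s_def)
qed

lemma y4_ub:
  assumes "B > 0" "t > 0" "x \<ge> 0"
  shows "y4 B t x \<le> (1/G5) * (B * t) powr (1/4) + x / sqrt 2 - KK * x^3 / ((B * t) powr (1/4))^2"
proof -
  define s where "s = (B * t) powr (1/4::real)"
  have s: "s > 0" using assms by (simp add: s_def)
  define u where "u = x / s"
  have u: "u \<ge> 0" using s assms by (simp add: u_def)
  have e: "y4 B t x = s * (z1 u / G5 + u / sqrt 2 - KK * z4 u)"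
    by (simp add: y4_def s_def u_def uvar_def z2_def KK_def G5_def)
  have a: "z1 u / G5 \<le> 1 / G5" using z1_le[of u] G5_pos by (intro divide_right_mono) auto
  have b: "KK * z4 u \<ge> KK * u^3" using z4_pos[OF u] KK_pos by (intro mult_left_mono) auto
  have "y4 B t x \<le> s * (1 / G5 + u / sqrt 2 - KK * u^3)" unfolding e using a b s
    by (intro mult_left_mono) auto
  also have "\<dots> = (1/G5) * s + x / sqrt 2 - KK * x^3 / s^2" using s
    by (simp add: u_def field_simps power2_eq_square power3_eq_cube)
  finally show ?thesis by (simp add: s_def)
qed

lemma y1_ub:
  assumes "B > 0" "t > 0" "x \<le> 0"
  shows "y1 B t x \<le> x / sqrt 2 - x^2 / (2 * G3 * (B * t) powr (1/4))"
proof -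
  define s where "s = (B * t) powr (1/4::real)"
  have s: "s > 0" using assms by (simp add: s_def)
  define u where "u = x / s"
  have u: "u \<le> 0" using s assms by (simp add: u_def divide_nonpos_pos)
  have e: "y1 B t x = s * (u / sqrt 2 - z3 u / (2 * G3) + KK * z4 u)"
    by (simp add: y1_def s_def u_def uvar_def z2_def KK_def G3_def)
  have z3: "z3 u / (2 * G3) \<ge> u^2 / (2 * G3)"
    using z3_ge[of u] G3_pos by (intro divide_right_mono) auto
  have u3: "u^3 \<le> 0" using u by (simp add: power_le_zero_eq)
  have "z4 u \<le> 0" using z4_neg[OF u] u3 by linarith
  then have z4: "KK * z4 u \<le> 0" using KK_pos
    by (simp add: mult_nonneg_nonpos)
  have "y1 B t x \<le> s * (u / sqrt 2 - u^2 / (2 * G3))" unfolding e using z3 z4 s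
    by (intro mult_left_mono) auto
  also have "\<dots> = x / sqrt 2 - x^2 / (2 * G3 * s)" using s
    by (simp add: u_def field_simps power2_eq_square)
  finally show ?thesis by (simp add: s_def)
qed

lemma y2_ub:
  assumes "B > 0" "t > 0" "x \<le> 0"
  shows "y2 B t x \<le> (1/G5) * (B * t) powr (1/4) - x / sqrt 2 + KK * x^3 / ((B * t) powr (1/4))^2"
proof -
  define s where "s = (B * t) powr (1/4::real)"
  have s: "s > 0" using assms by (simp add: s_def)
  define u where "u = x / s"
  have u: "u \<le> 0" using s assms by (simp add: u_def divide_nonpos_pos)
  have e: "y2 B t x = s * (z1 u / G5 - u / sqrt 2 + KK * z4 u)"
    by (simp add: y2_def s_def u_def uvar_def z2_def KK_def G5_def)
  have a: "z1 u / G5 \<le> 1 / G5" using z1_le[of u] G5_pos by (intro divide_right_mono) auto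
  have b: "KK * z4 u \<le> KK * u^3" using z4_neg[OF u] KK_pos by (intro mult_left_mono) auto
  have "y2 B t x \<le> s * (1 / G5 - u / sqrt 2 + KK * u^3)" unfolding e using a b s
    by (intro mult_left_mono) auto
  also have "\<dots> = (1/G5) * s - x / sqrt 2 + KK * x^3 / s^2" using s
    by (simp add: u_def field_simps power2_eq_square power3_eq_cube)
  finally show ?thesis by (simp add: s_def)
qed

lemma l1: "(c::real)>0 \<Longrightarrow> filterlim (\<lambda>x. p + q*x - c*x^3) at_bot at_top" by real_asymp
lemma l2: "(c::real)>0 \<Longrightarrow> filterlim (\<lambda>y. p*y + q - c/y^2) at_bot (at_right 0)" by real_asymp
lemma l3: "(c::real)>0 \<Longrightarrow> filterlim (\<lambda>x. q*x - c*x^2) at_bot at_bot" by real_asymp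
lemma l4: "(c::real)>0 \<Longrightarrow> filterlim (\<lambda>y. q - c/y) at_bot (at_right 0)" by real_asymp
lemma l5: "(c::real)>0 \<Longrightarrow> filterlim (\<lambda>x. p - q*x + c*x^3) at_bot at_bot" by real_asymp
lemma l6: "(c::real)>0 \<Longrightarrow> filterlim (\<lambda>x. c*x) at_top at_top" by real_asymp
lemma l7: "(c::real)>0 \<Longrightarrow> filterlim (\<lambda>y. c/y) at_top (at_right 0)" by real_asymp

theorem lemma2:
  fixes B :: real
  assumes "B > 0"
  shows "(\<forall>t>0. filterlim (\<lambda>x. y3 B t x) at_top at_top)
       \<and> (\<forall>t>0. filterlim (\<lambda>x. y4 B t x) at_bot at_top)
       \<and> (\<forall>x>0. filterlim (\<lambda>t. y3 B t x) at_top (at_right 0))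
       \<and> (\<forall>x>0. filterlim (\<lambda>t. y4 B t x) at_bot (at_right 0))
       \<and> (\<forall>t>0. filterlim (\<lambda>x. y1 B t x) at_bot at_bot)
       \<and> (\<forall>t>0. filterlim (\<lambda>x. y2 B t x) at_bot at_bot)
       \<and> (\<forall>x>0. filterlim (\<lambda>t. y1 B t (-x)) at_bot (at_right 0))
       \<and> (\<forall>x>0. filterlim (\<lambda>t. y2 B t (-x)) at_bot (at_right 0))"
proof (intro conjI allI impI)
  fix t :: real assume t: "t > 0"
  show "filterlim (\<lambda>x. y3 B t x) at_top at_top"
  proof (rule filterlim_at_top_mono)
    show "filterlim (\<lambda>x. (1 / sqrt 2) * x) at_top at_top" by (rule l6) simp
    show "\<forall>\<^sub>F x in at_top. 1 / sqrt 2 * x \<le> y3 B t x"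
      using eventually_ge_at_top[of 0] by eventually_elim (use y3_lb(1)[OF assms t] in simp)
  qed
next
  fix t :: real assume t: "t > 0"
  show "filterlim (\<lambda>x. y4 B t x) at_bot at_top"
  proof (rule filterlim_at_bot_mono)
    show "filterlim (\<lambda>x. (1/G5) * (B * t) powr (1/4) + (1 / sqrt 2) * x - (KK / ((B * t) powr (1/4))^2) * x^3) at_bot at_top"
      by (rule l1) (use KK_pos assms t in simp)
    show "\<forall>\<^sub>F x in at_top. y4 B t x \<le> (1/G5) * (B * t) powr (1/4) + (1 / sqrt 2) * x - (KK / ((B * t) powr (1/4))^2) * x^3"
      using eventually_ge_at_top[of 0] by eventually_elim (use y4_ub[OF assms t] in simp)
  qed
next
  fix x :: real assume x: "x > 0"
  show "filterlim (\<lambda>t. y3 B t x) at_top (at_right 0)"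
  proof (rule filterlim_at_top_mono)
    have "filterlim (\<lambda>s. (x^2 / (2 * G3)) / s) at_top (at_right 0)"
      by (rule l7) (use x G3_pos in simp)
    from filterlim_compose[OF this s_lim[OF assms]]
    show "filterlim (\<lambda>t. (x^2 / (2 * G3)) / (B * t) powr (1/4)) at_top (at_right 0)" .
    show "\<forall>\<^sub>F t in at_right 0. (x^2 / (2 * G3)) / (B * t) powr (1/4) \<le> y3 B t x"
      using ev_pos by eventually_elim (use y3_lb(2)[OF assms _, of _ x] x in simp)
  qed
next
  fix x :: real assume x: "x > 0"
  show "filterlim (\<lambda>t. y4 B t x) at_bot (at_right 0)"
  proof (rule filterlim_at_bot_mono)
    have "filterlim (\<lambda>s. (1/G5) * s + x / sqrt 2 - (KK * x^3) / s^2) at_bot (at_right 0)"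
      by (rule l2) (use x KK_pos in simp)
    from filterlim_compose[OF this s_lim[OF assms]]
    show "filterlim (\<lambda>t. (1/G5) * (B * t) powr (1/4) + x / sqrt 2 - (KK * x^3) / ((B * t) powr (1/4))^2) at_bot (at_right 0)" .
    show "\<forall>\<^sub>F t in at_right 0. y4 B t x \<le> (1/G5) * (B * t) powr (1/4) + x / sqrt 2 - (KK * x^3) / ((B * t) powr (1/4))^2"
      using ev_pos by eventually_elim (use y4_ub[OF assms _, of _ x] x in simp)
  qed
next
  fix t :: real assume t: "t > 0"
  show "filterlim (\<lambda>x. y1 B t x) at_bot at_bot"
  proof (rule filterlim_at_bot_mono)
    show "filterlim (\<lambda>x. (1 / sqrt 2) * x - (1 / (2 * G3 * (B * t) powr (1/4))) * x^2) at_bot at_bot"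
      by (rule l3) (use G3_pos assms t in simp)
    show "\<forall>\<^sub>F x in at_bot. y1 B t x \<le> (1 / sqrt 2) * x - (1 / (2 * G3 * (B * t) powr (1/4))) * x^2"
      using eventually_le_at_bot[of 0] by eventually_elim (use y1_ub[OF assms t] in simp)
  qed
next
  fix t :: real assume t: "t > 0"
  show "filterlim (\<lambda>x. y2 B t x) at_bot at_bot"
  proof (rule filterlim_at_bot_mono)
    show "filterlim (\<lambda>x. (1/G5) * (B * t) powr (1/4) - (1 / sqrt 2) * x + (KK / ((B * t) powr (1/4))^2) * x^3) at_bot at_bot"
      by (rule l5) (use KK_pos assms t in simp)
    show "\<forall>\<^sub>F x in at_bot. y2 B t x \<le> (1/G5) * (B * t) powr (1/4) - (1 / sqrt 2) * x + (KK / ((B * t) powr (1/4))^2) * x^3"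
      using eventually_le_at_bot[of 0] by eventually_elim (use y2_ub[OF assms t] in simp)
  qed
next
  fix x :: real assume x: "x > 0"
  show "filterlim (\<lambda>t. y1 B t (-x)) at_bot (at_right 0)"
  proof (rule filterlim_at_bot_mono)
    have "filterlim (\<lambda>s. (-x) / sqrt 2 - (x^2 / (2 * G3)) / s) at_bot (at_right 0)"
      by (rule l4) (use x G3_pos in simp)
    from filterlim_compose[OF this s_lim[OF assms]]
    show "filterlim (\<lambda>t. (-x) / sqrt 2 - (x^2 / (2 * G3)) / (B * t) powr (1/4)) at_bot (at_right 0)" .
    show "\<forall>\<^sub>F t in at_right 0. y1 B t (-x) \<le> (-x) / sqrt 2 - (x^2 / (2 * G3)) / (B * t) powr (1/4)"
      using ev_pos by eventually_elim (use y1_ub[OF assms _, of _ "-x"] x in simp)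
  qed
next
  fix x :: real assume x: "x > 0"
  show "filterlim (\<lambda>t. y2 B t (-x)) at_bot (at_right 0)"
  proof (rule filterlim_at_bot_mono)
    have "filterlim (\<lambda>s. (1/G5) * s + x / sqrt 2 - (KK * x^3) / s^2) at_bot (at_right 0)"
      by (rule l2) (use x KK_pos in simp)
    from filterlim_compose[OF this s_lim[OF assms]]
    show "filterlim (\<lambda>t. (1/G5) * (B * t) powr (1/4) + x / sqrt 2 - (KK * x^3) / ((B * t) powr (1/4))^2) at_bot (at_right 0)" .
    show "\<forall>\<^sub>F t in at_right 0. y2 B t (-x) \<le> (1/G5) * (B * t) powr (1/4) + x / sqrt 2 - (KK * x^3) / ((B * t) powr (1/4))^2"
      using ev_pos by eventually_elim (use y2_ub[OF assms _, of _ "-x"] x in simp)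
  qed
qed

end
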